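(* Let $G$ be a finite group with $|G| = mp$, where $p$ is a prime and $m$ is a natural number such that $m/q < p < m$, where $q$ is the smallest prime divisor of $m$. Suppose that a Sylow $p$-subgroup of $G$ is not normal in $G$. Then $G$ possesses a characteristic abelian $p$-complement (a characteristic abelian subgroup of order $m$). *)

theory Defs
  imports "HOL-Algebra.Algebra" "HOL-Computational_Algebra.Primes"
begin

definition characteristic_subgroup :: "'a set \<Rightarrow> ('a, 'b) monoid_scheme \<Rightarrow> bool" where
  "characteristic_subgroup H G \<longleftrightarrow>
     subgroup H G \<and> (\<forall>\<phi> \<in> iso G G. \<phi> ` H = H)"

definition sylow_subgroup :: "nat \<Rightarrow> 'a set \<Rightarrow> ('a, 'b) monoid_scheme \<Rightarrow> bool" where
  "sylow_subgroup p P G \<longleftrightarrow>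
     subgroup P G \<and> card P = p ^ multiplicity p (order G)"

end

theory Submission
  imports Defs
begin

context group begin

lemma inv_cancel_aux [simp]:
  "g \<in> carrier G \<Longrightarrow> x \<in> carrier G \<Longrightarrow> inv g \<otimes> (g \<otimes> x) = x"
  by (simp add: m_assoc[symmetric])

lemma conj_pow:
  assumes "g \<in> carrier G" "h \<in> carrier G"
  shows "(g \<otimes> h \<otimes> inv g) [^] (n::nat) = g \<otimes> (h [^] n) \<otimes> inv g"
proof (induction n)
  case 0 then show ?case using assms by (simp add: r_inv)
next
  case (Suc n)
  have "(g \<otimes> h \<otimes> inv g) [^] Suc n = (g \<otimes> (h [^] n) \<otimes> inv g) \<otimes> (g \<otimes> h \<otimes> inv g)"
    using Suc by simp
  also have "\<dots> = g \<otimes> (h [^] n \<otimes> h) \<otimes> inv g"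
  proof -
    have "(g \<otimes> (h [^] n) \<otimes> inv g) \<otimes> (g \<otimes> h \<otimes> inv g) = g \<otimes> (h [^] n) \<otimes> (inv g \<otimes> g) \<otimes> h \<otimes> inv g"
      using assms by (simp add: m_assoc)
    also have "\<dots> = g \<otimes> (h [^] n \<otimes> h) \<otimes> inv g" using assms by (simp add: m_assoc)
    finally show ?thesis .
  qed
  finally show ?case using assms by (simp add: nat_pow_Suc)
qed

lemma ord_prime_elem:
  assumes "Factorial_Ring.prime (p::nat)" "z \<in> carrier G" "z [^] p = \<one>" "z \<noteq> \<one>"
  shows "ord z = p"
proof -
  have "ord z dvd p" using assms pow_eq_id by blast
  moreover have "ord z \<noteq> 1" using assms pow_eq_id[of z 1] by auto
  ultimately show ?thesis using assms(1) prime_nat_iff by blast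
qed

lemma powers_card:
  assumes "Factorial_Ring.prime (p::nat)" "z \<in> carrier G" "z [^] p = \<one>" "z \<noteq> \<one>"
  shows "card ((\<lambda>k. z [^] k) ` {..<p}) = p"
proof -
  have o: "ord z = p" using ord_prime_elem assms by blast
  have "p > 0" using assms prime_gt_0_nat by blast
  hence "{..<p} = {0..ord z - 1}" using o by auto
  hence "inj_on (\<lambda>k. z [^] k) {..<p}" using ord_inj[OF assms(2)] by simp
  thus ?thesis by (simp add: card_image)
qed

lemma pow_mod_in:
  assumes "Factorial_Ring.prime (p::nat)" "z \<in> carrier G" "z [^] p = \<one>"
  shows "z [^] (n::nat) \<in> (\<lambda>k. z [^] k) ` {..<p}"
proof -
  have "p > 0" using assms prime_gt_0_nat by blast
  have "z [^] n = z [^] (n mod p)"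
    proof -
    have "z [^] n = z [^] (p * (n div p) + n mod p)" by simp
    also have "\<dots> = (z [^] p) [^] (n div p) \<otimes> z [^] (n mod p)"
      using assms(2) by (simp add: nat_pow_mult nat_pow_pow)
    finally have "z [^] n = (z [^] p) [^] (n div p) \<otimes> z [^] (n mod p)" .
    hence "z [^] n = z [^] (n mod p)" using assms by simp
    thus ?thesis .
  qed
  thus ?thesis using \<open>p > 0\<close> by auto
qed

lemma sub_pow_closed:
  assumes "subgroup H G" "h \<in> H" shows "h [^] (n::nat) \<in> H"
proof (induction n)
  case 0 then show ?case using assms subgroup.one_closed by (metis nat_pow_0)
next
  case (Suc n) then show ?case using assms subgroup.m_closed by (metis nat_pow_Suc)
qed

lemma sub_pow_card:
  assumes "subgroup H G" "h \<in> H" shows "h [^] card H = \<one>"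
proof -
  interpret H: group "G\<lparr>carrier := H\<rparr>" using subgroup.subgroup_is_group assms is_group by blast
  have "h [^]\<^bsub>G\<lparr>carrier := H\<rparr>\<^esub> order (G\<lparr>carrier := H\<rparr>) = \<one>\<^bsub>G\<lparr>carrier := H\<rparr>\<^esub>"
    using H.pow_order_eq_1 assms by simp
  thus ?thesis by (simp add: order_def flip: nat_pow_consistent)
qed

lemma conj_closed [simp]:
  "a \<in> carrier G \<Longrightarrow> x \<in> carrier G \<Longrightarrow> a \<otimes> x \<otimes> inv a \<in> carrier G"
  by simp

lemma conj_mult:
  assumes "a \<in> carrier G" "b \<in> carrier G" "x \<in> carrier G"
  shows "(a \<otimes> b) \<otimes> x \<otimes> inv (a \<otimes> b) = a \<otimes> (b \<otimes> x \<otimes> inv b) \<otimes> inv a"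
  using assms by (simp add: inv_mult_group m_assoc)

lemma conj_eq_iff:
  assumes "a \<in> carrier G" "x \<in> carrier G" "y \<in> carrier G"
  shows "(a \<otimes> x \<otimes> inv a = y) \<longleftrightarrow> (x = inv a \<otimes> y \<otimes> a)"
proof
  assume "a \<otimes> x \<otimes> inv a = y"
  hence "inv a \<otimes> y \<otimes> a = inv a \<otimes> (a \<otimes> x \<otimes> inv a) \<otimes> a" by simp
  also have "\<dots> = x" using assms by (simp add: m_assoc)
  finally show "x = inv a \<otimes> y \<otimes> a" by simp
next
  assume "x = inv a \<otimes> y \<otimes> a"
  hence "a \<otimes> x \<otimes> inv a = a \<otimes> (inv a \<otimes> y \<otimes> a) \<otimes> inv a" by simp
  also have "\<dots> = y" using assms by (simp add: m_assoc m_assoc[symmetric, of a "inv a"])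
  finally show "a \<otimes> x \<otimes> inv a = y" .
qed

lemma conj_comm_iff:
  assumes "a \<in> carrier G" "x \<in> carrier G"
  shows "(a \<otimes> x \<otimes> inv a = x) \<longleftrightarrow> (a \<otimes> x = x \<otimes> a)"
  using assms by (metis inv_solve_right m_closed)

lemma conj_one_iff:
  assumes "a \<in> carrier G" "x \<in> carrier G"
  shows "(a \<otimes> x \<otimes> inv a = \<one>) \<longleftrightarrow> x = \<one>"
  using assms conj_eq_iff[of a x "\<one>"] by simp

end

lemma nt_aux:
  fixes k e m p q :: nat
  assumes "k * e = m * p" "k \<le> m - 1" "e \<le> m" "\<not> p dvd m" "Factorial_Ring.prime p"
    and "\<And>n. n dvd m \<Longrightarrow> n \<ge> 2 \<Longrightarrow> q \<le> n" "m < p * q" "m > 0"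
  shows "e = m"
proof -
  have "e > p"
  proof (rule ccontr)
    assume "\<not> e > p"
    hence "k * e \<le> (m - 1) * p" using assms(2) by (simp add: mult_mono)
    also have "\<dots> < m * p" using assms(5,8) prime_gt_0_nat by (simp add: diff_mult_distrib)
    finally show False using assms(1) by simp
  qed
  have "p dvd k * e" using assms(1) by simp
  hence "p dvd k \<or> p dvd e" using assms(5) prime_dvd_mult_iff by blast
  thus ?thesis
  proof
    assume "p dvd e"
    then obtain f where f: "e = p * f" by auto
    have "k * f = m" using assms(1) f assms(5) prime_gt_0_nat[OF assms(5)] by (simp add: mult.commute mult.left_commute)
    have "f \<ge> 2" using f \<open>e > p\<close> by (cases f; cases "f - 1") auto
    hence "q \<le> f" using assms(6) \<open>k * f = m\<close> by (metis dvd_triv_right)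
    hence "p * q \<le> e" using f by simp
    thus ?thesis using assms(3,7) by simp
  next
    assume "p dvd k"
    then obtain k' where k': "k = p * k'" by auto
    have km: "k' * e = m" using assms(1) k' prime_gt_0_nat[OF assms(5)] by (simp add: mult.commute mult.left_commute)
    show ?thesis
    proof (cases "k' \<ge> 2")
      case True
      hence "q \<le> k'" using assms(6) km by (metis dvd_triv_left)
      hence qe: "q * e \<le> m" using km by (metis mult_le_mono1)
      have "q > 0" using assms(7) by (cases q) auto
      hence "q * p < q * e" using \<open>e > p\<close> by simp
      hence "p * q < m" using qe by (metis mult.commute order_less_le_trans)
      thus ?thesis using assms(7) by simp
    next
      case False
      hence "k' = 0 \<or> k' = 1" by auto
      thus ?thesis using km assms(8) by auto
    qed
  qed
qed

theorem lemma2: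
  fixes G (structure) and m p q :: nat
  assumes "group G" and "finite (carrier G)"
    and "order G = m * p"
    and "Factorial_Ring.prime p"
    and "Factorial_Ring.prime q" and "q dvd m" and "\<forall>r. Factorial_Ring.prime r \<and> r dvd m \<longrightarrow> q \<le> r"
    and "real m / real q < real p" and "p < m"
    and "\<exists>P. sylow_subgroup p P G \<and> \<not> (P \<lhd> G)"
  shows "\<exists>H. characteristic_subgroup H G \<and> comm_group (G\<lparr>carrier := H\<rparr>) \<and> card H = m"
proof -
  interpret group G by (rule assms(1))
  have fin: "finite (carrier G)" by (rule assms(2))
  have pp: "Factorial_Ring.prime p" by (rule assms(4))
  have p2: "p \<ge> 2" using pp prime_ge_2_nat by blast
  have q2: "q \<ge> 2" using assms(5) prime_ge_2_nat by blast
  have mpos: "m > 0" using assms(9) by simp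
  have mq: "m < p * q"
  proof -
    have "real m < real p * real q" using assms(8) q2 by (simp add: divide_less_eq)
    thus ?thesis by (metis of_nat_less_iff of_nat_mult)
  qed
  have minq: "q \<le> n" if nn: "n dvd m" "n \<ge> 2" for n
  proof -
    obtain r where r: "Factorial_Ring.prime r" "r dvd n"
      using nn(2) prime_factor_nat[of n] by auto
    have "r dvd m" using r(2) nn(1) by (rule dvd_trans)
    hence "q \<le> r" using assms(7) r(1) by blast
    moreover have "r \<le> n" using r(2) nn(2) dvd_imp_le by auto
    ultimately show ?thesis by simp
  qed
  have pndvd: "\<not> p dvd m"
  proof
    assume "p dvd m"
    then obtain k where k: "m = p * k" by auto
    have "k \<noteq> 1" using k assms(9) by auto
    hence "k \<ge> 2" using k mpos by (cases k) auto
    hence "q \<le> k" using minq k by simp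
    hence "p * q \<le> m" using k by simp
    thus False using mq by simp
  qed
  have mult1: "multiplicity p (order G) = 1"
  proof -
    have "multiplicity p (m * p) = multiplicity p m + multiplicity p p"
      using pp mpos p2 by (simp add: prime_elem_multiplicity_mult_distrib)
    thus ?thesis using assms(3) pndvd pp
      by (simp add: not_dvd_imp_multiplicity_0 multiplicity_self prime_elem_not_unit)
  qed
  obtain P where Psyl: "sylow_subgroup p P G" and Pnn: "\<not> (P \<lhd> G)" using assms(10) by blast
  have Psub: "subgroup P G" using Psyl unfolding sylow_subgroup_def by blast
  have cardP: "card P = p" using Psyl mult1 unfolding sylow_subgroup_def by simp
  have PG: "P \<subseteq> carrier G" using Psub subgroup.subset by blast
  have finP: "finite P" using PG fin finite_subset by blast
  have oneP: "\<one> \<in> P" using Psub subgroup.one_closed by blast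
  have Ppow: "h [^] p = \<one>" if "h \<in> P" for h
    using sub_pow_card[OF Psub that] cardP by simp
  have Pgen: "P = (\<lambda>k. h [^] k) ` {..<p}" if "h \<in> P" "h \<noteq> \<one>" for h
  proof -
    have "(\<lambda>k. h [^] k) ` {..<p} \<subseteq> P" using sub_pow_closed[OF Psub that(1)] by auto
    moreover have "card ((\<lambda>k. h [^] k) ` {..<p}) = card P"
      using powers_card[OF pp _ Ppow[OF that(1)] that(2)] that(1) PG cardP by auto
    ultimately show ?thesis using finP by (metis card_subset_eq)
  qed
  have Pcomm: "a \<otimes> b = b \<otimes> a" if ab: "a \<in> P" "b \<in> P" for a b
  proof (cases "a = \<one>")
    case True then show ?thesis using ab PG by auto
  next
    case False
    then obtain k where "b = a [^] (k::nat)" using Pgen[OF ab(1)] ab(2) by auto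
    thus ?thesis using ab PG by (metis nat_pow_Suc nat_pow_Suc2 subsetD)
  qed
  have Pnorm: "\<forall>x\<in>P. g \<otimes> x \<otimes> inv g \<in> P"
    if gh: "g \<in> carrier G" "h \<in> P" "h \<noteq> \<one>" "g \<otimes> h \<otimes> inv g \<in> P" for g h
  proof
    fix x assume "x \<in> P"
    then obtain k where "x = h [^] (k::nat)" using Pgen[OF gh(2,3)] by auto
    hence "g \<otimes> x \<otimes> inv g = (g \<otimes> h \<otimes> inv g) [^] k" using conj_pow gh PG by auto
    thus "g \<otimes> x \<otimes> inv g \<in> P" using sub_pow_closed[OF Psub gh(4)] by simp
  qed
  have KEY: "g \<in> P" if gh: "g \<in> carrier G" "h \<in> P" "h \<noteq> \<one>" "g \<otimes> h \<otimes> inv g \<in> P" for g h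
  proof (rule ccontr)
    assume gP: "g \<notin> P"
    define NP where "NP = {a \<in> carrier G. \<forall>x\<in>P. a \<otimes> x \<otimes> inv a \<in> P}"
    have NPG: "NP \<subseteq> carrier G" unfolding NP_def by auto
    have surj: "\<exists>y\<in>P. x = a \<otimes> y \<otimes> inv a" if ax: "a \<in> NP" "x \<in> P" for a x
    proof -
      have aG: "a \<in> carrier G" using ax NP_def by auto
      have sub: "(\<lambda>y. a \<otimes> y \<otimes> inv a) ` P \<subseteq> P" using ax(1) unfolding NP_def by auto
      have "inj_on (\<lambda>y. a \<otimes> y \<otimes> inv a) P"
      proof (rule inj_onI)
        fix y z assume yz: "y \<in> P" "z \<in> P" "a \<otimes> y \<otimes> inv a = a \<otimes> z \<otimes> inv a"
        have "y = inv a \<otimes> (a \<otimes> z \<otimes> inv a) \<otimes> a"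
          using conj_eq_iff[of a y "a \<otimes> z \<otimes> inv a"] yz aG PG by auto
        also have "\<dots> = z" using conj_eq_iff[of a z "a \<otimes> z \<otimes> inv a"] yz aG PG by auto
        finally show "y = z" .
      qed
      hence "(\<lambda>y. a \<otimes> y \<otimes> inv a) ` P = P" using endo_inj_surj[OF finP sub] by blast
      hence "x \<in> (\<lambda>y. a \<otimes> y \<otimes> inv a) ` P" using ax(2) by simp
      thus ?thesis unfolding image_iff by simp
    qed
    have NPsub: "subgroup NP G"
    proof (rule subgroupI)
      show "NP \<subseteq> carrier G" by (rule NPG)
      have "\<one> \<in> NP" unfolding NP_def using PG by auto
      thus "NP \<noteq> {}" by blast
    next
      fix a assume a: "a \<in> NP"
      have aG: "a \<in> carrier G" using a NP_def by auto
      have "inv a \<otimes> x \<otimes> inv (inv a) \<in> P" if x: "x \<in> P" for x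
      proof -
        obtain y where y: "y \<in> P" "x = a \<otimes> y \<otimes> inv a" using surj[OF a x] by blast
        have "y = inv a \<otimes> x \<otimes> a" using conj_eq_iff[of a y x] y x aG PG by auto
        thus ?thesis using y aG by simp
      qed
      thus "inv a \<in> NP" unfolding NP_def using aG by auto
    next
      fix a b assume ab: "a \<in> NP" "b \<in> NP"
      have aG: "a \<in> carrier G" and bG: "b \<in> carrier G" using ab NP_def by auto
      have "(a \<otimes> b) \<otimes> x \<otimes> inv (a \<otimes> b) \<in> P" if x: "x \<in> P" for x
      proof -
        have "b \<otimes> x \<otimes> inv b \<in> P" using ab(2) x NP_def by auto
        hence "a \<otimes> (b \<otimes> x \<otimes> inv b) \<otimes> inv a \<in> P" using ab(1) NP_def by auto
        thus ?thesis using conj_mult[of a b x] aG bG x PG by auto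
      qed
      thus "a \<otimes> b \<in> NP" unfolding NP_def using aG bG by auto
    qed
    have PNP: "P \<subseteq> NP"
    proof
      fix a assume a: "a \<in> P"
      have "a \<otimes> x \<otimes> inv a \<in> P" if x: "x \<in> P" for x
      proof -
        have "a \<otimes> x = x \<otimes> a" using Pcomm a x by blast
        hence "a \<otimes> x \<otimes> inv a = x" using conj_comm_iff a x PG by blast
        thus ?thesis using x by simp
      qed
      thus "a \<in> NP" unfolding NP_def using a PG by auto
    qed
    have gNP: "g \<in> NP" using Pnorm[OF gh] gh(1) unfolding NP_def by auto
    have NPne: "NP \<noteq> carrier G"
    proof
      assume "NP = carrier G"
      hence "\<forall>x\<in>carrier G. \<forall>h\<in>P. x \<otimes> h \<otimes> inv x \<in> P" unfolding NP_def by auto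
      hence "P \<lhd> G" using normal_inv_iff Psub by blast
      thus False using Pnn by simp
    qed
    obtain g1 where g1: "g1 \<in> carrier G" "g1 \<notin> NP" using NPne NPG by blast
    have finNP: "finite NP" using NPG fin finite_subset by blast
    interpret NPg: group "G\<lparr>carrier := NP\<rparr>" using subgroup.subgroup_is_group NPsub assms(1) by blast
    have PsubNP: "subgroup P (G\<lparr>carrier := NP\<rparr>)" by (rule subgroup_incl[OF Psub NPsub PNP])
    have "card P dvd card NP"
      using NPg.lagrange[OF PsubNP] by (simp add: order_def) (metis dvd_triv_right)
    then obtain d where d: "card NP = p * d" using cardP by auto
    define c where "c = card (rcosets NP)"
    have lag: "c * card NP = m * p" using lagrange[OF NPsub] assms(3) c_def by simp
    have p0: "p > 0" using p2 by simp
    have cd: "c * d = m" using lag d p0 by (simp add: mult.commute mult.left_commute)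
    have c2: "c \<ge> 2"
    proof -
      have "c \<noteq> 0" using cd mpos by auto
      moreover have "c \<noteq> 1"
      proof
        assume "c = 1"
        hence "card NP = card (carrier G)" using lag assms(3) by (simp add: order_def)
        hence "NP = carrier G" using card_subset_eq[OF fin NPG] by simp
        thus False using NPne by simp
      qed
      ultimately show ?thesis by linarith
    qed
    have d2: "d \<ge> 2"
    proof -
      have "d \<noteq> 0" using cd mpos by auto
      moreover have "d \<noteq> 1"
      proof
        assume "d = 1"
        hence "card P = card NP" using d cardP by simp
        hence "P = NP" using card_subset_eq[OF finNP PNP] by simp
        thus False using gNP gP by simp
      qed
      ultimately show ?thesis by linarith
    qed
    have qc: "q \<le> c" using minq[of c] cd c2 by (metis dvd_triv_left)
    have qd: "q \<le> d" using minq[of d] cd d2 by (metis dvd_triv_right)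
    have cp: "c < p"
    proof (rule ccontr)
      assume "\<not> c < p"
      hence "p * q \<le> c * d" using qd by (metis mult_le_mono not_less)
      thus False using cd mq by simp
    qed
    have dp: "d < p"
    proof (rule ccontr)
      assume "\<not> d < p"
      hence "p * q \<le> c * d" using qc by (metis mult_le_mono not_less mult.commute)
      thus False using cd mq by simp
    qed
    define f where "f = (\<lambda>h. NP #> (g1 \<otimes> h))"
    have fimg: "f ` P \<subseteq> rcosets NP"
    proof
      fix Z assume "Z \<in> f ` P"
      then obtain h where h: "h \<in> P" "Z = NP #> (g1 \<otimes> h)" unfolding f_def by auto
      have "g1 \<otimes> h \<in> carrier G" using h g1 PG by auto
      thus "Z \<in> rcosets NP" unfolding RCOSETS_def using h by blast
    qed
    have finR: "finite (rcosets NP)" using c2 c_def card_gt_0_iff by fastforce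
    have "\<not> inj_on f P"
    proof
      assume "inj_on f P"
      hence "card (f ` P) = p" using card_image cardP by metis
      moreover have "card (f ` P) \<le> c" using card_mono[OF finR fimg] c_def by simp
      ultimately show False using cp by simp
    qed
    then obtain h1 h2 where h12: "h1 \<in> P" "h2 \<in> P" "h1 \<noteq> h2" "f h1 = f h2"
      unfolding inj_on_def by blast
    have h1G: "h1 \<in> carrier G" and h2G: "h2 \<in> carrier G" using h12 PG by auto
    have "g1 \<otimes> h1 \<in> NP #> (g1 \<otimes> h2)"
      using rcos_self[of "g1 \<otimes> h1" NP] h12(4) g1 h1G NPsub unfolding f_def by simp
    hence inNP: "(g1 \<otimes> h1) \<otimes> inv (g1 \<otimes> h2) \<in> NP"
      using subgroup.rcos_module_imp[OF NPsub assms(1)] g1 h2G by simp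
    define hh where "hh = h1 \<otimes> inv h2"
    have hhP: "hh \<in> P" unfolding hh_def using h12 Psub subgroup.m_closed subgroup.m_inv_closed by metis
    have hhG: "hh \<in> carrier G" using hhP PG by auto
    have hh1: "hh \<noteq> \<one>"
    proof
      assume "hh = \<one>"
      hence "h1 \<otimes> inv h2 \<otimes> h2 = h2" unfolding hh_def using h2G by simp
      hence "h1 = h2" using h1G h2G by (simp add: m_assoc)
      thus False using h12 by simp
    qed
    define y where "y = g1 \<otimes> hh \<otimes> inv g1"
    have yG: "y \<in> carrier G" unfolding y_def using g1 hhG by simp
    have "(g1 \<otimes> h1) \<otimes> inv (g1 \<otimes> h2) = y"
      unfolding y_def hh_def using g1 h1G h2G by (simp add: inv_mult_group m_assoc)
    hence yNP: "y \<in> NP" using inNP by simp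
    have yP: "y \<notin> P"
    proof
      assume "y \<in> P"
      hence "\<forall>x\<in>P. g1 \<otimes> x \<otimes> inv g1 \<in> P" using Pnorm[OF g1(1) hhP hh1] y_def by simp
      hence "g1 \<in> NP" unfolding NP_def using g1 by auto
      thus False using g1 by simp
    qed
    have ypow: "y [^] p = \<one>" unfolding y_def using conj_pow[OF g1(1) hhG] Ppow[OF hhP] g1 by simp
    have y1: "y \<noteq> \<one>" using yP oneP by auto
    have ordy: "ord y = p" using ord_prime_elem[OF pp yG ypow y1] .
    have noP: "y [^] t \<notin> P" if t: "0 < t" "t < p" for t
    proof
      assume zP: "y [^] t \<in> P"
      have z1: "y [^] t \<noteq> \<one>"
      proof
        assume "y [^] t = \<one>"
        hence "p dvd t" using pow_eq_id[OF yG] ordy by simp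
        thus False using t by (simp add: nat_dvd_not_less)
      qed
      define Y where "Y = (\<lambda>k. y [^] k) ` {..<p}"
      have "P \<subseteq> Y"
      proof
        fix w assume "w \<in> P"
        then obtain k where "w = (y [^] t) [^] (k::nat)" using Pgen[OF zP z1] by auto
        hence "w = y [^] (t * k)" using yG by (simp add: nat_pow_pow)
        thus "w \<in> Y" unfolding Y_def using pow_mod_in[OF pp yG ypow] by simp
      qed
      moreover have "card Y = card P" unfolding Y_def using powers_card[OF pp yG ypow y1] cardP by simp
      moreover have "finite Y" unfolding Y_def by simp
      ultimately have "P = Y" using card_subset_eq by metis
      moreover have "y \<in> Y" unfolding Y_def using p2 yG by (auto intro!: image_eqI[of _ _ 1])
      ultimately show False using yP by simp
    qed
    have key2: "a = b \<and> i = j"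
      if abij: "a \<in> P" "b \<in> P" "i \<le> j" "j < p" "a \<otimes> y [^] i = b \<otimes> y [^] j" for a b i j
    proof -
      have aG: "a \<in> carrier G" and bG: "b \<in> carrier G" using abij PG by auto
      have "y [^] j = y [^] (j - i) \<otimes> y [^] i" using abij(3) yG by (simp add: nat_pow_mult)
      hence "a \<otimes> y [^] i = (b \<otimes> y [^] (j - i)) \<otimes> y [^] i" using abij(5) aG bG yG by (simp add: m_assoc)
      hence ab: "a = b \<otimes> y [^] (j - i)" using aG bG yG by simp
      have ij: "i = j"
      proof (rule ccontr)
        assume "i \<noteq> j"
        hence "0 < j - i" "j - i < p" using abij by auto
        moreover have "y [^] (j - i) = inv b \<otimes> a" using ab aG bG yG by (simp add: m_assoc[symmetric])
        moreover have "inv b \<otimes> a \<in> P" using abij Psub subgroup.m_closed subgroup.m_inv_closed by metis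
        ultimately show False using noP by metis
      qed
      thus ?thesis using ab bG by simp
    qed
    have inj2: "inj_on (\<lambda>(a, k). a \<otimes> y [^] k) (P \<times> {..<p})"
    proof (rule inj_onI)
      fix u v assume uv: "u \<in> P \<times> {..<p}" "v \<in> P \<times> {..<p}"
        "(\<lambda>(a, k). a \<otimes> y [^] k) u = (\<lambda>(a, k). a \<otimes> y [^] k) v"
      obtain a i where u: "u = (a, i)" by (cases u)
      obtain b j where v: "v = (b, j)" by (cases v)
      show "u = v"
      proof (cases "i \<le> j")
        case True thus ?thesis using key2[of a b i j] uv u v by auto
      next
        case False thus ?thesis using key2[of b a j i] uv u v by auto
      qed
    qed
    have img: "(\<lambda>(a, k). a \<otimes> y [^] k) ` (P \<times> {..<p}) \<subseteq> NP"
    proof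
      fix w assume "w \<in> (\<lambda>(a, k). a \<otimes> y [^] k) ` (P \<times> {..<p})"
      then obtain a k where w: "a \<in> P" "w = a \<otimes> y [^] (k::nat)" by auto
      have "a \<in> NP" using w PNP by auto
      moreover have "y [^] k \<in> NP" by (rule sub_pow_closed[OF NPsub yNP])
      ultimately show "w \<in> NP" using w subgroup.m_closed[OF NPsub] by simp
    qed
    have "p * p = card (P \<times> {..<p})" using cardP by (simp add: card_cartesian_product)
    also have "\<dots> = card ((\<lambda>(a, k). a \<otimes> y [^] k) ` (P \<times> {..<p}))" using card_image[OF inj2] by simp
    also have "\<dots> \<le> card NP" using card_mono[OF finNP img] .
    also have "\<dots> = p * d" by (rule d)
    finally have "p * p \<le> p * d" .
    thus False using dp p0 by simp
  qed
  define cl where "cl x = {a \<otimes> x \<otimes> inv a | a. a \<in> carrier G}" for x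
  define ce where "ce x = {a \<in> carrier G. a \<otimes> x \<otimes> inv a = x}" for x
  have OS: "card (cl x) * card (ce x) = m * p" and ce_sub: "subgroup (ce x) G"
    if x: "x \<in> carrier G" for x
  proof -
    interpret A: group_action G "carrier G" "\<lambda>g. (\<lambda>h \<in> carrier G. g \<otimes> h \<otimes> (inv g))"
      by (rule action_by_conjugation)
    have o: "orbit G (\<lambda>g. (\<lambda>h \<in> carrier G. g \<otimes> h \<otimes> (inv g))) x = cl x"
      unfolding orbit_def cl_def using x by auto
    have s: "stabilizer G (\<lambda>g. (\<lambda>h \<in> carrier G. g \<otimes> h \<otimes> (inv g))) x = ce x"
      unfolding stabilizer_def ce_def using x by auto
    show "card (cl x) * card (ce x) = m * p"
      using A.orbit_stabilizer_theorem[OF x] o s assms(3) by simp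
    show "subgroup (ce x) G" using A.stabilizer_subgroup[OF x] s by simp
  qed

  have ceP: "ce x = P" if x: "x \<in> P" "x \<noteq> \<one>" for x
  proof
    show "ce x \<subseteq> P" using KEY x unfolding ce_def by auto
    show "P \<subseteq> ce x"
    proof
      fix a assume a: "a \<in> P"
      hence "a \<otimes> x = x \<otimes> a" using Pcomm x by blast
      hence "a \<otimes> x \<otimes> inv a = x" using conj_comm_iff a x PG by blast
      thus "a \<in> ce x" using a PG unfolding ce_def by auto
    qed
  qed
  have clcard: "card (cl x) = m" if x: "x \<in> P" "x \<noteq> \<one>" for x
    using OS[of x] ceP[OF x] cardP x PG p2 by auto
  have clsub: "cl x \<subseteq> carrier G" if "x \<in> carrier G" for x
    using that unfolding cl_def by auto
  define U where "U = (\<Union>x\<in>P-{\<one>}. cl x)"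
  have disj: "cl x \<inter> cl y = {}" if xy: "x \<in> P-{\<one>}" "y \<in> P-{\<one>}" "x \<noteq> y" for x y
  proof (rule ccontr)
    assume "cl x \<inter> cl y \<noteq> {}"
    then obtain a b where ab: "a \<in> carrier G" "b \<in> carrier G" "a \<otimes> x \<otimes> inv a = b \<otimes> y \<otimes> inv b"
      unfolding cl_def by auto
    have xG: "x \<in> carrier G" and yG: "y \<in> carrier G" using xy PG by auto
    have "y = inv b \<otimes> (a \<otimes> x \<otimes> inv a) \<otimes> inv (inv b)"
      using conj_eq_iff[of b y "a \<otimes> x \<otimes> inv a"] ab xG yG by simp
    also have "\<dots> = (inv b \<otimes> a) \<otimes> x \<otimes> inv (inv b \<otimes> a)"
      using conj_mult[of "inv b" a x] ab xG by simp
    finally have y: "y = (inv b \<otimes> a) \<otimes> x \<otimes> inv (inv b \<otimes> a)" .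
    have "inv b \<otimes> a \<in> P" using KEY[of "inv b \<otimes> a" x] y xy ab by auto
    hence "inv b \<otimes> a \<in> ce x" using ceP xy by auto
    hence "y = x" using y unfolding ce_def by auto
    thus False using xy by simp
  qed
  have cardU: "card U = (p - 1) * m"
  proof -
    have "card U = (\<Sum>x\<in>P-{\<one>}. card (cl x))"
      unfolding U_def
    proof (rule card_UN_disjoint)
      show "finite (P - {\<one>})" using finP by simp
      show "\<forall>x\<in>P - {\<one>}. finite (cl x)"
      proof
        fix x assume "x \<in> P - {\<one>}"
        hence "cl x \<subseteq> carrier G" using clsub PG by auto
        thus "finite (cl x)" using fin by (rule finite_subset)
      qed
      show "\<forall>x\<in>P - {\<one>}. \<forall>y\<in>P - {\<one>}. x \<noteq> y \<longrightarrow> cl x \<inter> cl y = {}" using disj by blast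
    qed
    also have "\<dots> = (\<Sum>x\<in>P-{\<one>}. m)" using clcard by simp
    also have "\<dots> = (p - 1) * m" using cardP oneP finP by simp
    finally show ?thesis .
  qed
  have UG: "U \<subseteq> carrier G" unfolding U_def using clsub PG by blast
  define K where "K = carrier G - U"
  have finK: "finite K" unfolding K_def using fin by simp
  have cardK: "card K = m"
  proof -
    have "card K = card (carrier G) - card U" unfolding K_def using UG fin card_Diff_subset finite_subset by metis
    also have "\<dots> = m * p - (p - 1) * m" using assms(3) cardU by (simp add: order_def)
    also have "\<dots> = m" using p2 by (simp add: diff_mult_distrib2 mult.commute)
    finally show ?thesis .
  qed
  have Umem: "u \<in> U \<longleftrightarrow> (\<exists>x\<in>P-{\<one>}. \<exists>a\<in>carrier G. u = a \<otimes> x \<otimes> inv a)" for u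
    unfolding U_def cl_def by auto
  have Uconj: "b \<otimes> u \<otimes> inv b \<in> U" if ub: "u \<in> U" "b \<in> carrier G" for u b
  proof -
    obtain x a where xa: "x \<in> P-{\<one>}" "a \<in> carrier G" "u = a \<otimes> x \<otimes> inv a" using ub(1) Umem[of u] by blast
    have "b \<otimes> u \<otimes> inv b = (b \<otimes> a) \<otimes> x \<otimes> inv (b \<otimes> a)"
      using conj_mult[of b a x] xa ub PG by auto
    thus ?thesis using Umem[of "b \<otimes> u \<otimes> inv b"] xa ub by auto
  qed
  have oneK: "\<one> \<in> K"
  proof -
    have "\<one> \<notin> U" using Umem[of "\<one>"] conj_one_iff PG by force
    thus ?thesis unfolding K_def by simp
  qed
  have ceK: "ce g = K" if g: "g \<in> K" "g \<noteq> \<one>" for g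
  proof -
    have gG: "g \<in> carrier G" using g K_def by auto
    have ce_sub_K: "ce g \<subseteq> K"
    proof
      fix c assume c: "c \<in> ce g"
      have cG: "c \<in> carrier G" and cg: "c \<otimes> g \<otimes> inv c = g" using c unfolding ce_def by auto
      show "c \<in> K"
      proof (rule ccontr)
        assume "c \<notin> K"
        hence "c \<in> U" using cG K_def by auto
        then obtain x a where xa: "x \<in> P-{\<one>}" "a \<in> carrier G" "c = a \<otimes> x \<otimes> inv a" using Umem[of c] by blast
        have xG: "x \<in> carrier G" using xa PG by auto
        define g' where "g' = inv a \<otimes> g \<otimes> a"
        have g'G: "g' \<in> carrier G" unfolding g'_def using xa gG by simp
        have "c \<otimes> g = g \<otimes> c" using cg conj_comm_iff cG gG by blast
        hence gc: "g \<otimes> c \<otimes> inv g = c" using conj_comm_iff cG gG by metis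
        have "g' \<otimes> x \<otimes> inv g' = (inv a \<otimes> g) \<otimes> (a \<otimes> x \<otimes> inv a) \<otimes> inv (inv a \<otimes> g)"
          unfolding g'_def using conj_mult[of "inv a \<otimes> g" a x] xa gG xG by simp
        also have "\<dots> = inv a \<otimes> (g \<otimes> c \<otimes> inv g) \<otimes> inv (inv a)"
          using conj_mult[of "inv a" g c] xa gG cG by simp
        also have "\<dots> = inv a \<otimes> c \<otimes> a" using gc xa by simp
        also have "\<dots> = x" using conj_eq_iff[of a x c] xa xG cG by simp
        finally have "g' \<otimes> x \<otimes> inv g' = x" .
        hence g'P: "g' \<in> P" using KEY[of g' x] g'G xa by auto
        have gg': "a \<otimes> g' \<otimes> inv a = g" using conj_eq_iff[of a g' g] g'_def xa gG g'G by simp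
        have "g' \<noteq> \<one>" using gg' g xa by auto
        hence "g \<in> U" using Umem[of g] g'P gg' xa by blast
        thus False using g K_def by auto
      qed
    qed
    have cl_sub: "cl g \<subseteq> K - {\<one>}"
    proof
      fix z assume "z \<in> cl g"
      then obtain b where b: "b \<in> carrier G" "z = b \<otimes> g \<otimes> inv b" unfolding cl_def by auto
      have "z \<notin> U"
      proof
        assume zU: "z \<in> U"
        have "inv b \<otimes> z \<otimes> inv (inv b) \<in> U" by (rule Uconj[OF zU inv_closed[OF b(1)]])
        moreover have "inv b \<otimes> z \<otimes> inv (inv b) = g" using conj_eq_iff[of b g z] b gG by simp
        ultimately show False using g K_def by auto
      qed
      moreover have "z \<noteq> \<one>" using conj_one_iff b gG g by auto
      ultimately show "z \<in> K - {\<one>}" using b gG K_def by auto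
    qed
    have c1: "card (cl g) \<le> m - 1"
      using card_mono[OF _ cl_sub] finK cardK oneK by auto
    have c2: "card (ce g) \<le> m" using card_mono[OF finK ce_sub_K] cardK by simp
    have "card (ce g) = m"
      by (rule nt_aux[OF OS[OF gG] c1 c2 pndvd pp minq mq mpos]) auto
    thus ?thesis using card_subset_eq[OF finK ce_sub_K] cardK by simp
  qed
  obtain g where g: "g \<in> K" "g \<noteq> \<one>"
  proof -
    have "K \<noteq> {\<one>}" using cardK assms(9) p2 by auto
    thus ?thesis using that oneK by blast
  qed
  have Ksub: "subgroup K G" using ce_sub[of g] ceK[OF g] g K_def by auto
  have KG: "K \<subseteq> carrier G" unfolding K_def by auto
  have Kcomm: "a \<otimes> b = b \<otimes> a" if ab: "a \<in> K" "b \<in> K" for a b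
  proof (cases "b = \<one>")
    case True thus ?thesis using ab KG by auto
  next
    case False
    hence "a \<in> ce b" using ceK ab by auto
    hence "a \<otimes> b \<otimes> inv a = b" unfolding ce_def by auto
    thus ?thesis using conj_comm_iff ab KG by blast
  qed
  have Kchar: "z \<in> K" if z: "z \<in> carrier G" "z [^] m = \<one>" for z
  proof (rule ccontr)
    assume "z \<notin> K"
    hence "z \<in> U" using z K_def by auto
    then obtain x a where xa: "x \<in> P-{\<one>}" "a \<in> carrier G" "z = a \<otimes> x \<otimes> inv a" using Umem[of z] by blast
    have xG: "x \<in> carrier G" using xa PG by auto
    have "a \<otimes> (x [^] m) \<otimes> inv a = \<one>" using conj_pow[of a x m] xa xG z by simp
    hence "x [^] m = \<one>" using conj_one_iff xa xG by simp
    moreover have "ord x = p" using ord_prime_elem[OF pp xG Ppow] xa by auto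
    ultimately have "p dvd m" using pow_eq_id xG by metis
    thus False using pndvd by simp
  qed
  have Kpow: "x [^] m = \<one>" if "x \<in> K" for x
    using sub_pow_card[OF Ksub that] cardK by simp
  have "characteristic_subgroup K G"
    unfolding characteristic_subgroup_def
  proof (intro conjI ballI Ksub)
    fix \<phi> assume phi: "\<phi> \<in> iso G G"
    have hom: "\<phi> \<in> hom G G" and bij: "bij_betw \<phi> (carrier G) (carrier G)" using phi unfolding iso_def by auto
    have sub: "\<phi> ` K \<subseteq> K"
    proof
      fix y assume "y \<in> \<phi> ` K"
      then obtain x where x: "x \<in> K" "y = \<phi> x" by auto
      have xG: "x \<in> carrier G" using x KG by auto
      have yG: "y \<in> carrier G" using x xG bij bij_betwE by blast
      have "y [^] m = \<phi> (x [^] m)" using hom_nat_pow[OF hom xG assms(1) assms(1)] x by simp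
      also have "\<dots> = \<one>" using Kpow x hom_one[OF hom assms(1) assms(1)] by simp
      finally show "y \<in> K" using Kchar yG by blast
    qed
    have "inj_on \<phi> K" by (rule inj_on_subset[OF bij_betw_imp_inj_on[OF bij] KG])
    hence "card (\<phi> ` K) = card K" by (rule card_image)
    thus "\<phi> ` K = K" using card_subset_eq[OF finK sub] by simp
  qed
  moreover have "comm_group (G\<lparr>carrier := K\<rparr>)"
  proof -
    interpret K: group "G\<lparr>carrier := K\<rparr>" using subgroup.subgroup_is_group Ksub assms(1) by blast
    show ?thesis by (rule K.group_comm_groupI) (use Kcomm in simp)
  qed
  ultimately show ?thesis using cardK by blast
qed

end
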